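(* Fix $T>0$ and a continuous function $h$ on $[0,T]$ with $h(t)>0$. Assume that for every boundary function $s$ on $[0,T]$ the Fixed Boundary Neumann Problem with flux $h$ has a (classical) solution $U^s$. Let $\mathcal{R}$ be the Neumann boundary-update operator $$\mathcal{R}(s)(t)=\int_0^t h(z)\,dz-\int_0^{s(t)}U^s(x,t)\,dx,\qquad 0\le t\le T.$$ If $s_1,s_2$ are boundary functions with $s_1(t)\le s_2(t)$ for all $t\in[0,T]$, then $\mathcal{R}(s_1)(t)\ge \mathcal{R}(s_2)(t)$ for all $t\in[0,T]$.
   Context: A boundary function on $[0,T]$ is a function $s\in C([0,T])\cap C^1((0,T])$ with $s(0)=0$ and $s(t)>0$ for $t\in(0,T]$. For such $s$ let $Q_{s,T}=\{(x,t):0<x<s(t),\,0<t<T\}$. The Fixed Boundary Neumann Problem on $s$ with flux $h$ asks for $U\in C(\overline{Q_{s,T}})\cap C^{2,1}(Q_{s,T})$ with $U_x$ continuous on $\overline{Q_{s,T}}\setminus\{t=0\}$ such that $U_t=U_{xx}$ in $Q_{s,T}$, $U(0,0)=0$, $U(s(t),t)=0$ for $t\in[0,T]$, and $-U_x(0,t)=h(t)$ for $t\in(0,T]$. Its solution is denoted $U^s$. (For such solutions, $\mathcal{R}(s)(t)$ coincides with $-\int_0^t U^s_x(s(z),z)\,dz$.) *)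

theory Defs
  imports "HOL-Analysis.Analysis"
begin

definition boundary_function :: "real \<Rightarrow> (real \<Rightarrow> real) \<Rightarrow> bool" where
  "boundary_function T s \<longleftrightarrow>
     continuous_on {0..T} s \<and>
     (\<exists>s'. (\<forall>t\<in>{0<..T}. (s has_real_derivative s' t) (at t within {0<..T}))
           \<and> continuous_on {0<..T} s') \<and>
     s 0 = 0 \<and> (\<forall>t\<in>{0<..T}. s t > 0)"

text \<open>The open domain Q_{s,T} and its closure (for a boundary function s, the closure of
  Q_{s,T} is exactly this set).\<close>
definition Qdom :: "real \<Rightarrow> (real \<Rightarrow> real) \<Rightarrow> (real \<times> real) set" where
  "Qdom T s = {(x,t). 0 < x \<and> x < s t \<and> 0 < t \<and> t < T}"

definition Qbar :: "real \<Rightarrow> (real \<Rightarrow> real) \<Rightarrow> (real \<times> real) set" where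
  "Qbar T s = {(x,t). 0 \<le> x \<and> x \<le> s t \<and> 0 \<le> t \<and> t \<le> T}"

definition FBNP :: "real \<Rightarrow> (real \<Rightarrow> real) \<Rightarrow> (real \<Rightarrow> real) \<Rightarrow> (real \<Rightarrow> real \<Rightarrow> real) \<Rightarrow> bool" where
  "FBNP T h s U \<longleftrightarrow>
     continuous_on (Qbar T s) (\<lambda>(x,t). U x t) \<and>
     (\<exists>Ux Uxx Ut.
        \<comment> \<open>U_x exists (one-sided at x=0, x=s(t)) and is continuous on closure minus {t=0}\<close>
        (\<forall>(x,t)\<in>Qbar T s. t > 0 \<longrightarrow>
            ((\<lambda>y. U y t) has_real_derivative Ux x t) (at x within {0..s t})) \<and>
        continuous_on (Qbar T s - {(x,t). t = 0}) (\<lambda>(x,t). Ux x t) \<and>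
        \<comment> \<open>C^{2,1} in Q\<close>
        (\<forall>(x,t)\<in>Qdom T s.
            ((\<lambda>y. Ux y t) has_real_derivative Uxx x t) (at x) \<and>
            ((\<lambda>\<tau>. U x \<tau>) has_real_derivative Ut x t) (at t)) \<and>
        continuous_on (Qdom T s) (\<lambda>(x,t). Uxx x t) \<and>
        continuous_on (Qdom T s) (\<lambda>(x,t). Ut x t) \<and>
        \<comment> \<open>heat equation and boundary conditions\<close>
        (\<forall>(x,t)\<in>Qdom T s. Ut x t = Uxx x t) \<and>
        U 0 0 = 0 \<and>
        (\<forall>t\<in>{0..T}. U (s t) t = 0) \<and>
        (\<forall>t\<in>{0<..T}. - Ux 0 t = h t))"

definition Rop :: "(real \<Rightarrow> real) \<Rightarrow> (real \<Rightarrow> real) \<Rightarrow> (real \<Rightarrow> real \<Rightarrow> real) \<Rightarrow> real \<Rightarrow> real" where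
  "Rop h s U t = integral {0..t} h - integral {0..s t} (\<lambda>x. U x t)"

end

theory Submission
  imports Defs
begin

lemma derx: "(f has_real_derivative D) (at x within S) \<Longrightarrow> ((\<lambda>y. f y + e*(a - y + b)) has_real_derivative D - e) (at x within S)"
  by (auto intro!: derivative_eq_intros)
lemma dert: "(f has_real_derivative D) (at x within S) \<Longrightarrow> ((\<lambda>y. f y + e*(y - a + b)) has_real_derivative D + e) (at x within S)"
  by (auto intro!: derivative_eq_intros)
lemma derc: "(f has_real_derivative D) (at x within S) \<Longrightarrow> ((\<lambda>y. f y - e) has_real_derivative D) (at x within S)"
  by (auto intro!: derivative_eq_intros)

lemma half_lt: "(0::real) < m \<Longrightarrow> m \<le> a \<Longrightarrow> m / 2 < a" by simp

lemma deriv_left_min: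
  fixes f :: "real \<Rightarrow> real"
  assumes "(f has_real_derivative D) (at a within {a..b})" "a < b" "\<forall>y\<in>{a..b}. f a \<le> f y"
  shows "0 \<le> D"
proof -
  have "((\<lambda>y. (f y - f a) / (y - a)) \<longlongrightarrow> D) (at_right a)"
    using assms(1) has_field_derivative_iff at_within_Icc_at_right[OF assms(2)] by metis
  moreover have "eventually (\<lambda>y. 0 \<le> (f y - f a)/(y-a)) (at_right a)"
    unfolding eventually_at_right_field using assms(2,3)
    by (intro exI[of _ b]) auto
  ultimately show ?thesis by (rule tendsto_lowerbound) simp
qed

lemma cont_slice:
  assumes "continuous_on (Qbar T s) (\<lambda>(x,t). U x t)" "t \<in> {0..T}"
  shows "continuous_on {0..s t} (\<lambda>x. U x t)"
proof -
  have "continuous_on {0..s t} (\<lambda>x. (x,t))" by (intro continuous_intros)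
  moreover have "(\<lambda>x. (x,t)) ` {0..s t} \<subseteq> Qbar T s" using assms(2) by (auto simp: Qbar_def)
  ultimately show ?thesis using continuous_on_compose2[OF assms(1)] by fastforce
qed

lemma maxp_lt:
  fixes W Wx Wxx Wt :: "real \<Rightarrow> real \<Rightarrow> real" and s :: "real \<Rightarrow> real"
  assumes T: "T > 0"
    and s_cont: "continuous_on {0..T} s" and s0: "s 0 = 0" and spos: "\<And>t. 0 < t \<Longrightarrow> t \<le> T \<Longrightarrow> s t > 0"
    and Wc: "continuous_on (Qbar T s) (\<lambda>(x,t). W x t)"
    and Wxd: "\<And>x t. (x,t) \<in> Qbar T s \<Longrightarrow> t > 0 \<Longrightarrow> ((\<lambda>y. W y t) has_real_derivative Wx x t) (at x within {0..s t})"
    and Wxxd: "\<And>x t. (x,t) \<in> Qdom T s \<Longrightarrow> ((\<lambda>y. Wx y t) has_real_derivative Wxx x t) (at x)"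
    and Wtd: "\<And>x t. (x,t) \<in> Qdom T s \<Longrightarrow> ((\<lambda>\<tau>. W x \<tau>) has_real_derivative Wt x t) (at t)"
    and heat: "\<And>x t. (x,t) \<in> Qdom T s \<Longrightarrow> Wt x t = Wxx x t"
    and W00: "W 0 0 \<ge> 0"
    and Wbd: "\<And>t. t \<in> {0..T} \<Longrightarrow> W (s t) t \<ge> 0"
    and Wneu: "\<And>t. 0 < t \<Longrightarrow> t \<le> T \<Longrightarrow> Wx 0 t \<le> 0"
    and p0: "(x0,t0) \<in> Qbar T s" and t0T: "t0 < T"
  shows "W x0 t0 \<ge> 0"
proof (rule ccontr)
  assume neg: "\<not> W x0 t0 \<ge> 0"
  have sge: "\<And>t. 0 \<le> t \<Longrightarrow> t \<le> T \<Longrightarrow> 0 \<le> s t"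
    using s0 spos by (metis less_eq_real_def)
  have x0: "0 \<le> x0" "x0 \<le> s t0" "0 \<le> t0" using p0 by (auto simp: Qbar_def)
  have "t0 \<noteq> 0"
  proof
    assume "t0 = 0"
    then have "x0 = 0" using x0 s0 by auto
    then show False using neg W00 \<open>t0 = 0\<close> by simp
  qed
  then have t0pos: "t0 > 0" using x0 by auto
  obtain tm where tm: "tm \<in> {0..T}" "\<forall>y\<in>{0..T}. s y \<le> s tm"
    using continuous_attains_sup[OF compact_Icc _ s_cont] T by auto
  define L where "L = s tm"
  have sL: "\<And>t. 0 \<le> t \<Longrightarrow> t \<le> T \<Longrightarrow> s t \<le> L" using tm L_def by auto
  have L0: "0 \<le> L" using sL[of 0] s0 T by auto
  define \<epsilon> where "\<epsilon> = - W x0 t0 / (2*(t0 + L + 1))"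
  have epos: "\<epsilon> > 0" using neg t0pos L0 unfolding \<epsilon>_def by (intro divide_pos_pos) auto
  define Z where "Z = (\<lambda>x t. W x t + \<epsilon> * (t - x + L))"
  have "\<epsilon> * (t0 - x0 + L) \<le> \<epsilon> * (t0 + L + 1)"
    using epos x0 by (intro mult_left_mono) auto
  also have "\<epsilon> * (t0 + L + 1) = - W x0 t0 / 2"
    using t0pos L0 by (simp add: \<epsilon>_def field_simps)
  finally have Zneg: "Z x0 t0 < 0" using neg by (simp add: Z_def)
  define S where "S = {0..1::real} \<times> {0..t0}"
  define \<phi> where "\<phi> = (\<lambda>p::real\<times>real. (fst p * s (snd p), snd p))"
  have \<phi>S: "\<phi> ` S \<subseteq> Qbar T s"
  proof
    fix q assume "q \<in> \<phi> ` S"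
    then obtain u t where ut: "u \<in> {0..1}" "t \<in> {0..t0}" "q = (u * s t, t)"
      by (auto simp: S_def \<phi>_def)
    have "0 \<le> s t" using sge ut t0T by auto
    then have "u * s t \<le> s t" "0 \<le> u * s t" using ut
      by (auto simp: mult_left_le_one_le)
    then show "q \<in> Qbar T s" using ut t0T by (auto simp: Qbar_def)
  qed
  have Zc: "continuous_on (Qbar T s) (\<lambda>(x,t). Z x t)"
  proof -
    have "continuous_on (Qbar T s) (\<lambda>p. (\<lambda>(x,t). W x t) p + \<epsilon> * (snd p - fst p + L))"
      using Wc by (intro continuous_intros) auto
    then show ?thesis by (simp add: Z_def case_prod_unfold)
  qed
  have \<phi>c: "continuous_on S \<phi>"
  proof -
    have "continuous_on S (\<lambda>p. s (snd p))"
      by (rule continuous_on_compose2[OF s_cont]) (use t0T in \<open>auto intro!: continuous_intros simp: S_def\<close>)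
    then show ?thesis unfolding \<phi>_def by (intro continuous_intros) auto
  qed
  have gc: "continuous_on S ((\<lambda>(x,t). Z x t) \<circ> \<phi>)"
    by (rule continuous_on_compose[OF \<phi>c continuous_on_subset[OF Zc \<phi>S]])
  obtain p1 where p1: "p1 \<in> S" "\<forall>q\<in>S. ((\<lambda>(x,t). Z x t) \<circ> \<phi>) p1 \<le> ((\<lambda>(x,t). Z x t) \<circ> \<phi>) q"
    using continuous_attains_inf[OF _ _ gc] x0 by (auto simp: S_def compact_Times)
  obtain u1 t1 where p1e: "p1 = (u1, t1)" by fastforce
  define x1 where "x1 = u1 * s t1"
  have t1: "0 \<le> t1" "t1 \<le> t0" "0 \<le> u1" "u1 \<le> 1" using p1 p1e by (auto simp: S_def)
  have x1Q: "(x1, t1) \<in> Qbar T s" using \<phi>S p1 p1e by (auto simp: \<phi>_def x1_def)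
  have minp: "\<And>y t. (y,t) \<in> Qbar T s \<Longrightarrow> t \<le> t0 \<Longrightarrow> Z x1 t1 \<le> Z y t"
  proof -
    fix y t assume yt: "(y,t) \<in> Qbar T s" "t \<le> t0"
    have yb: "0 \<le> y" "y \<le> s t" "0 \<le> t" using yt by (auto simp: Qbar_def)
    obtain u where u: "u \<in> {0..1}" "y = u * s t"
    proof (cases "s t = 0")
      case True then show ?thesis using that[of 0] yb by auto
    next
      case False then show ?thesis using that[of "y / s t"] yb by auto
    qed
    then have "(u,t) \<in> S" using yb yt by (auto simp: S_def)
    then show "Z x1 t1 \<le> Z y t" using p1(2) p1e u by (auto simp: \<phi>_def x1_def)
  qed
  have Z1neg: "Z x1 t1 < 0" using minp[OF p0] Zneg by auto
  have x1b: "0 \<le> x1" "x1 \<le> s t1" using x1Q by (auto simp: Qbar_def)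
  show False
  proof (cases "t1 = 0")
    case True
    then have "x1 = 0" using x1b s0 by auto
    moreover have "0 \<le> \<epsilon> * L" using L0 epos by simp
    ultimately show False using Z1neg W00 True by (simp add: Z_def)
  next
    case t1ne: False
    then have t1pos: "t1 > 0" using t1 by auto
    have st1: "s t1 > 0" using spos t1pos t1 t0T by auto
    show False
    proof (cases "x1 = s t1")
      case True
      have "W (s t1) t1 \<ge> 0" using Wbd t1 t0T by auto
      moreover have "s t1 \<le> L" using sL t1 t0T by auto
      moreover have "0 \<le> \<epsilon> * (t1 - s t1 + L)" using epos t1 \<open>s t1 \<le> L\<close> by simp
      ultimately show False using Z1neg True by (simp add: Z_def)
    next
      case xne: False
      show False
      proof (cases "x1 = 0")
        case True
        have d: "((\<lambda>y. Z y t1) has_real_derivative (Wx 0 t1 - \<epsilon>)) (at 0 within {0..s t1})"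
          unfolding Z_def
        proof (rule derx)
          have "(0,t1) \<in> Qbar T s" using x1Q True by simp
          from Wxd[OF this t1pos] show "((\<lambda>y. W y t1) has_real_derivative Wx 0 t1) (at 0 within {0..s t1})" .
        qed
        have "\<forall>y\<in>{0..s t1}. Z 0 t1 \<le> Z y t1"
        proof
          fix y assume y: "y \<in> {0..s t1}"
          then have "(y,t1) \<in> Qbar T s" using t1 t0T by (simp add: Qbar_def)
          from minp[OF this] show "Z 0 t1 \<le> Z y t1" using True t1 by simp
        qed
        from deriv_left_min[OF d st1 this] have "Wx 0 t1 \<ge> \<epsilon>" by simp
        then show False using Wneu[of t1] t1pos t1 t0T epos by auto
      next
        case xne0: False
        have x1i: "0 < x1" "x1 < s t1" using x1b xne xne0 by auto
        have QD: "(x1,t1) \<in> Qdom T s" using x1i t1pos t1 t0T by (auto simp: Qdom_def)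
        have Ztle: "Wt x1 t1 + \<epsilon> \<le> 0"
        proof (rule ccontr)
          assume "\<not> Wt x1 t1 + \<epsilon> \<le> 0"
          then have gp: "Wt x1 t1 + \<epsilon> > 0" by simp
          have dt: "((\<lambda>\<tau>. Z x1 \<tau>) has_real_derivative (Wt x1 t1 + \<epsilon>)) (at t1)"
            unfolding Z_def using dert[OF Wtd[OF QD]] by simp
          obtain d where d: "d > 0" "\<forall>h>0. h < d \<longrightarrow> Z x1 (t1 - h) < Z x1 t1"
            using DERIV_pos_inc_left[OF dt gp] by blast
          have t1T: "t1 \<in> {0..T}" using t1 t0T by simp
          have "continuous (at t1 within {0..T}) s"
            using s_cont t1T by (simp add: continuous_on_eq_continuous_within)
          then have "\<forall>e>0. \<exists>d>0. \<forall>t'\<in>{0..T}. dist t' t1 < d \<longrightarrow> dist (s t') (s t1) < e"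
            unfolding continuous_within_eps_delta .
          moreover have "s t1 - x1 > 0" using x1i by simp
          ultimately obtain \<delta> where \<delta>: "\<delta> > 0" "\<forall>t'\<in>{0..T}. dist t' t1 < \<delta> \<longrightarrow> dist (s t') (s t1) < s t1 - x1"
            by blast
          define h where "h = min d (min \<delta> t1) / 2"
          have hm: "min d (min \<delta> t1) \<le> d" "min d (min \<delta> t1) \<le> \<delta>" "min d (min \<delta> t1) \<le> t1" "min d (min \<delta> t1) > 0"
            using d \<delta> t1pos by auto
          have h1: "h > 0" using hm(4) unfolding h_def by simp
          have h2: "h < d" unfolding h_def by (rule half_lt[OF hm(4) hm(1)])
          have h3: "h < \<delta>" unfolding h_def by (rule half_lt[OF hm(4) hm(2)])
          have h4: "h < t1" unfolding h_def by (rule half_lt[OF hm(4) hm(3)])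
          note h = h1 h2 h3 h4
          have "t1 - h \<in> {0..T}" "dist (t1 - h) t1 < \<delta>" using h t1 t0T by (auto simp: dist_real_def)
          then have "dist (s (t1 - h)) (s t1) < s t1 - x1"
            using \<delta>(2) by blast
          then have "x1 < s (t1 - h)" unfolding dist_real_def by linarith
          then have "(x1, t1 - h) \<in> Qbar T s" using x1i h t1 t0T by (simp add: Qbar_def)
          moreover have "t1 - h \<le> t0" using h t1 by simp
          ultimately have "Z x1 t1 \<le> Z x1 (t1 - h)" by (rule minp)
          moreover have "Z x1 (t1 - h) < Z x1 t1" using d(2) h by simp
          ultimately show False by linarith
        qed
        have Wxxneg: "Wxx x1 t1 < 0" using Ztle heat[OF QD] epos by auto
        define f' where "f' = (\<lambda>y. Wx y t1 - \<epsilon>)"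
        have fd: "\<And>y. 0 < y \<Longrightarrow> y < s t1 \<Longrightarrow> ((\<lambda>y. Z y t1) has_real_derivative f' y) (at y)"
        proof -
          fix y assume y: "0 < y" "y < s t1"
          then have "(y,t1) \<in> Qbar T s" using t1 t0T by (auto simp: Qbar_def)
          from Wxd[OF this t1pos] have "((\<lambda>y. W y t1) has_real_derivative Wx y t1) (at y)"
            using at_within_interior[of y "{0..s t1}"] y by auto
          then show "((\<lambda>y. Z y t1) has_real_derivative f' y) (at y)"
            unfolding Z_def f'_def by (rule derx)
        qed
        have f'0: "f' x1 = 0"
        proof (rule DERIV_local_min[OF fd[OF x1i]])
          show "0 < min x1 (s t1 - x1)" using x1i by auto
          show "\<forall>y. \<bar>x1 - y\<bar> < min x1 (s t1 - x1) \<longrightarrow> Z x1 t1 \<le> Z y t1"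
          proof (intro allI impI)
            fix y assume "\<bar>x1 - y\<bar> < min x1 (s t1 - x1)"
            then have "(y,t1) \<in> Qbar T s" using t1 t0T x1i by (auto simp: Qbar_def)
            then show "Z x1 t1 \<le> Z y t1" using minp t1 by auto
          qed
        qed
        have f'd: "(f' has_real_derivative Wxx x1 t1) (at x1)"
          unfolding f'_def using derc[OF Wxxd[OF QD]] by simp
        obtain d2 where d2: "d2 > 0" "\<forall>h>0. h < d2 \<longrightarrow> f' x1 > f' (x1 + h)"
          using DERIV_neg_dec_right[OF f'd Wxxneg] by blast
        define h where "h = min d2 (s t1 - x1) / 2"
        have hm: "min d2 (s t1 - x1) \<le> d2" "min d2 (s t1 - x1) \<le> s t1 - x1" "min d2 (s t1 - x1) > 0"
          using d2 x1i by auto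
        have h1: "h > 0" using hm(3) unfolding h_def by simp
        have h2: "h < d2" unfolding h_def by (rule half_lt[OF hm(3) hm(1)])
        have "h < s t1 - x1" unfolding h_def by (rule half_lt[OF hm(3) hm(2)])
        then have h3: "x1 + h < s t1" by simp
        note h = h1 h2 h3
        obtain z where z: "x1 < z" "z < x1 + h" "Z (x1 + h) t1 - Z x1 t1 = (x1 + h - x1) * f' z"
          using MVT2[of x1 "x1 + h" "\<lambda>y. Z y t1" f'] fd h x1i by force
        have "f' z < 0" using d2(2)[rule_format, of "z - x1"] z h f'0 by auto
        then have "h * f' z < 0" using h1 by (simp add: mult_pos_neg)
        then have "Z (x1 + h) t1 < Z x1 t1" using z(3) by simp
        moreover have "(x1 + h, t1) \<in> Qbar T s" using h x1i t1 t0T by (auto simp: Qbar_def)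
        ultimately show False using minp t1 by force
      qed
    qed
  qed
qed

lemma maxp:
  fixes W Wx Wxx Wt :: "real \<Rightarrow> real \<Rightarrow> real" and s :: "real \<Rightarrow> real"
  assumes T: "T > 0"
    and s_cont: "continuous_on {0..T} s" and s0: "s 0 = 0" and spos: "\<And>t. 0 < t \<Longrightarrow> t \<le> T \<Longrightarrow> s t > 0"
    and Wc: "continuous_on (Qbar T s) (\<lambda>(x,t). W x t)"
    and Wxd: "\<And>x t. (x,t) \<in> Qbar T s \<Longrightarrow> t > 0 \<Longrightarrow> ((\<lambda>y. W y t) has_real_derivative Wx x t) (at x within {0..s t})"
    and Wxxd: "\<And>x t. (x,t) \<in> Qdom T s \<Longrightarrow> ((\<lambda>y. Wx y t) has_real_derivative Wxx x t) (at x)"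
    and Wtd: "\<And>x t. (x,t) \<in> Qdom T s \<Longrightarrow> ((\<lambda>\<tau>. W x \<tau>) has_real_derivative Wt x t) (at t)"
    and heat: "\<And>x t. (x,t) \<in> Qdom T s \<Longrightarrow> Wt x t = Wxx x t"
    and W00: "W 0 0 \<ge> 0"
    and Wbd: "\<And>t. t \<in> {0..T} \<Longrightarrow> W (s t) t \<ge> 0"
    and Wneu: "\<And>t. 0 < t \<Longrightarrow> t \<le> T \<Longrightarrow> Wx 0 t \<le> 0"
    and p0: "(x0,t0) \<in> Qbar T s"
  shows "W x0 t0 \<ge> 0"
proof (cases "t0 < T")
  case True
  have lowT: "\<And>x t. (x,t) \<in> Qbar T s \<Longrightarrow> t < T \<Longrightarrow> W x t \<ge> 0"
    by (rule maxp_lt[OF T s_cont s0 spos Wc Wxd Wxxd Wtd heat W00 Wbd Wneu])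
  then show ?thesis using True p0 by blast
next
  case False
  have lowT: "\<And>x t. (x,t) \<in> Qbar T s \<Longrightarrow> t < T \<Longrightarrow> W x t \<ge> 0"
    by (rule maxp_lt[OF T s_cont s0 spos Wc Wxd Wxxd Wtd heat W00 Wbd Wneu])
  have tT: "t0 = T" using False p0 by (auto simp: Qbar_def)
  have sT: "s T > 0" using spos T by auto
  have x0: "0 \<le> x0" "x0 \<le> s T" using p0 tT by (auto simp: Qbar_def)
  define \<gamma> where "\<gamma> = (\<lambda>t. (x0 * s t / s T, t))"
  have sge: "\<And>t. 0 \<le> t \<Longrightarrow> t \<le> T \<Longrightarrow> 0 \<le> s t"
    using s0 spos by (metis less_eq_real_def)
  have \<gamma>Q: "\<gamma> ` {0..T} \<subseteq> Qbar T s"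
  proof
    fix q assume "q \<in> \<gamma> ` {0..T}"
    then obtain t where t: "t \<in> {0..T}" "q = \<gamma> t" by auto
    have st: "0 \<le> s t" using sge t by auto
    have "x0 * s t \<le> s T * s t" using x0 st by (intro mult_right_mono) auto
    then have "x0 * s t / s T \<le> s t" using sT by (simp add: divide_le_eq mult.commute)
    moreover have "0 \<le> x0 * s t / s T" using x0 st sT by simp
    ultimately show "q \<in> Qbar T s" using t by (auto simp: Qbar_def \<gamma>_def)
  qed
  have \<gamma>c: "continuous_on {0..T} \<gamma>"
    unfolding \<gamma>_def using s_cont sT by (intro continuous_intros) auto
  have gc: "continuous_on {0..T} ((\<lambda>(x,t). W x t) \<circ> \<gamma>)"
    by (rule continuous_on_compose[OF \<gamma>c continuous_on_subset[OF Wc \<gamma>Q]])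
  then have lim: "(((\<lambda>(x,t). W x t) \<circ> \<gamma>) \<longlongrightarrow> ((\<lambda>(x,t). W x t) \<circ> \<gamma>) T) (at T within {0..T})"
    using T unfolding continuous_on_def by auto
  have gT: "((\<lambda>(x,t). W x t) \<circ> \<gamma>) T = W x0 t0" using sT tT by (simp add: \<gamma>_def)
  have ev: "eventually (\<lambda>t. 0 \<le> ((\<lambda>(x,t). W x t) \<circ> \<gamma>) t) (at T within {0..T})"
    unfolding eventually_at_filter
  proof (intro always_eventually allI impI)
    fix t assume "t \<noteq> T" "t \<in> {0..T}"
    then have "\<gamma> t \<in> Qbar T s" "t < T" using \<gamma>Q by auto
    then show "0 \<le> ((\<lambda>(x,t). W x t) \<circ> \<gamma>) t" using lowT by (auto simp: \<gamma>_def)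
  qed
  have "\<not> trivial_limit (at T within {0..T})"
    using at_within_Icc_at_left[OF T] by simp
  from tendsto_lowerbound[OF lim ev this] show ?thesis using gT by simp
qed


theorem lemma1:
  fixes T :: real and h :: "real \<Rightarrow> real"
    and U :: "(real \<Rightarrow> real) \<Rightarrow> real \<Rightarrow> real \<Rightarrow> real"
    and s1 s2 :: "real \<Rightarrow> real"
  assumes "T > 0"
    and "continuous_on {0..T} h"
    and "\<forall>t\<in>{0..T}. h t > 0"
    and "\<forall>s. boundary_function T s \<longrightarrow> FBNP T h s (U s)"
    and "boundary_function T s1" and "boundary_function T s2"
    and "\<forall>t\<in>{0..T}. s1 t \<le> s2 t"
  shows "\<forall>t\<in>{0..T}. Rop h s1 (U s1) t \<ge> Rop h s2 (U s2) t"
proof -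
  note T = assms(1)
  have F1: "FBNP T h s1 (U s1)" and F2: "FBNP T h s2 (U s2)" using assms(4-6) by auto
  have b1: "continuous_on {0..T} s1" "s1 0 = 0" "\<And>t. 0 < t \<Longrightarrow> t \<le> T \<Longrightarrow> s1 t > 0"
    using assms(5) unfolding boundary_function_def by auto
  have b2: "continuous_on {0..T} s2" "s2 0 = 0" "\<And>t. 0 < t \<Longrightarrow> t \<le> T \<Longrightarrow> s2 t > 0"
    using assms(6) unfolding boundary_function_def by auto
  have hpos: "\<And>t. 0 < t \<Longrightarrow> t \<le> T \<Longrightarrow> h t > 0" using assms(3) by auto
  obtain Ux1 Uxx1 Ut1 where
    c1: "continuous_on (Qbar T s1) (\<lambda>(x,t). U s1 x t)" and
    dx1: "\<forall>(x,t)\<in>Qbar T s1. t > 0 \<longrightarrow> ((\<lambda>y. U s1 y t) has_real_derivative Ux1 x t) (at x within {0..s1 t})" and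
    dd1: "\<forall>(x,t)\<in>Qdom T s1. ((\<lambda>y. Ux1 y t) has_real_derivative Uxx1 x t) (at x) \<and>
            ((\<lambda>\<tau>. U s1 x \<tau>) has_real_derivative Ut1 x t) (at t)" and
    he1: "\<forall>(x,t)\<in>Qdom T s1. Ut1 x t = Uxx1 x t" and
    z1: "U s1 0 0 = 0" and bd1: "\<forall>t\<in>{0..T}. U s1 (s1 t) t = 0" and
    n1: "\<forall>t\<in>{0<..T}. - Ux1 0 t = h t"
    using F1 unfolding FBNP_def by blast
  obtain Ux2 Uxx2 Ut2 where
    c2: "continuous_on (Qbar T s2) (\<lambda>(x,t). U s2 x t)" and
    dx2: "\<forall>(x,t)\<in>Qbar T s2. t > 0 \<longrightarrow> ((\<lambda>y. U s2 y t) has_real_derivative Ux2 x t) (at x within {0..s2 t})" and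
    dd2: "\<forall>(x,t)\<in>Qdom T s2. ((\<lambda>y. Ux2 y t) has_real_derivative Uxx2 x t) (at x) \<and>
            ((\<lambda>\<tau>. U s2 x \<tau>) has_real_derivative Ut2 x t) (at t)" and
    he2: "\<forall>(x,t)\<in>Qdom T s2. Ut2 x t = Uxx2 x t" and
    z2: "U s2 0 0 = 0" and bd2: "\<forall>t\<in>{0..T}. U s2 (s2 t) t = 0" and
    n2: "\<forall>t\<in>{0<..T}. - Ux2 0 t = h t"
    using F2 unfolding FBNP_def by blast
  have U2nn: "\<And>x t. (x,t) \<in> Qbar T s2 \<Longrightarrow> U s2 x t \<ge> 0"
  proof -
    fix x t assume p: "(x,t) \<in> Qbar T s2"
    show "U s2 x t \<ge> 0"
    proof (rule maxp[of T s2 "U s2" Ux2 Uxx2 Ut2, OF T b2 c2 _ _ _ _ _ _ _ p])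
      show "\<And>x t. (x,t) \<in> Qbar T s2 \<Longrightarrow> t > 0 \<Longrightarrow> ((\<lambda>y. U s2 y t) has_real_derivative Ux2 x t) (at x within {0..s2 t})"
        using dx2 by blast
      show "\<And>x t. (x,t) \<in> Qdom T s2 \<Longrightarrow> ((\<lambda>y. Ux2 y t) has_real_derivative Uxx2 x t) (at x)"
        using dd2 by blast
      show "\<And>x t. (x,t) \<in> Qdom T s2 \<Longrightarrow> ((\<lambda>\<tau>. U s2 x \<tau>) has_real_derivative Ut2 x t) (at t)"
        using dd2 by blast
      show "\<And>x t. (x,t) \<in> Qdom T s2 \<Longrightarrow> Ut2 x t = Uxx2 x t"
        using he2 by blast
      show "U s2 0 0 \<ge> 0" using z2 by simp
      show "\<And>t. t \<in> {0..T} \<Longrightarrow> U s2 (s2 t) t \<ge> 0" using bd2 by simp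
      show "\<And>t. 0 < t \<Longrightarrow> t \<le> T \<Longrightarrow> Ux2 0 t \<le> 0"
        using n2 hpos by (metis greaterThanAtMost_iff less_eq_real_def neg_0_le_iff_le)
    qed
  qed
  have sub: "Qbar T s1 \<subseteq> Qbar T s2" using assms(7) by (force simp: Qbar_def)
  have subd: "Qdom T s1 \<subseteq> Qdom T s2"
  proof
    fix p assume "p \<in> Qdom T s1"
    then obtain x t where p: "p = (x,t)" "0 < x" "x < s1 t" "0 < t" "t < T" by (auto simp: Qdom_def)
    then have "s1 t \<le> s2 t" using assms(7) by auto
    then show "p \<in> Qdom T s2" using p by (auto simp: Qdom_def)
  qed
  define W where "W = (\<lambda>x t. U s2 x t - U s1 x t)"
  have Wnn: "\<And>x t. (x,t) \<in> Qbar T s1 \<Longrightarrow> W x t \<ge> 0"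
  proof -
    fix x t assume p: "(x,t) \<in> Qbar T s1"
    show "W x t \<ge> 0"
    proof (rule maxp[of T s1 W "\<lambda>x t. Ux2 x t - Ux1 x t" "\<lambda>x t. Uxx2 x t - Uxx1 x t"
          "\<lambda>x t. Ut2 x t - Ut1 x t", OF T b1 _ _ _ _ _ _ _ _ p])
      have "continuous_on (Qbar T s1) (\<lambda>p. (\<lambda>(x,t). U s2 x t) p - (\<lambda>(x,t). U s1 x t) p)"
        using continuous_on_subset[OF c2 sub] c1 by (intro continuous_on_diff)
      then show "continuous_on (Qbar T s1) (\<lambda>(x,t). W x t)"
        by (simp add: W_def case_prod_unfold)
      show "\<And>x t. (x,t) \<in> Qbar T s1 \<Longrightarrow> t > 0 \<Longrightarrow> ((\<lambda>y. W y t) has_real_derivative Ux2 x t - Ux1 x t) (at x within {0..s1 t})"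
      proof -
        fix x t assume q: "(x,t) \<in> Qbar T s1" "t > 0"
        have "t \<le> T" using q by (auto simp: Qbar_def)
        then have le: "s1 t \<le> s2 t" using assms(7) q by auto
        have "((\<lambda>y. U s2 y t) has_real_derivative Ux2 x t) (at x within {0..s2 t})"
          using dx2 q sub by blast
        then have a: "((\<lambda>y. U s2 y t) has_real_derivative Ux2 x t) (at x within {0..s1 t})"
          by (rule DERIV_subset) (use le in auto)
        have b: "((\<lambda>y. U s1 y t) has_real_derivative Ux1 x t) (at x within {0..s1 t})"
          using dx1 q by blast
        show "((\<lambda>y. W y t) has_real_derivative Ux2 x t - Ux1 x t) (at x within {0..s1 t})"
          unfolding W_def by (rule DERIV_diff[OF a b])
      qed
      show "\<And>x t. (x,t) \<in> Qdom T s1 \<Longrightarrow> ((\<lambda>y. Ux2 y t - Ux1 y t) has_real_derivative Uxx2 x t - Uxx1 x t) (at x)"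
      proof -
        fix x t assume q: "(x,t) \<in> Qdom T s1"
        then have q2: "(x,t) \<in> Qdom T s2" using subd by blast
        show "((\<lambda>y. Ux2 y t - Ux1 y t) has_real_derivative Uxx2 x t - Uxx1 x t) (at x)"
          using dd1 dd2 q q2 by (intro DERIV_diff) blast+
      qed
      show "\<And>x t. (x,t) \<in> Qdom T s1 \<Longrightarrow> ((\<lambda>\<tau>. W x \<tau>) has_real_derivative Ut2 x t - Ut1 x t) (at t)"
      proof -
        fix x t assume q: "(x,t) \<in> Qdom T s1"
        then have q2: "(x,t) \<in> Qdom T s2" using subd by blast
        show "((\<lambda>\<tau>. W x \<tau>) has_real_derivative Ut2 x t - Ut1 x t) (at t)"
          unfolding W_def using dd1 dd2 q q2 by (intro DERIV_diff) blast+
      qed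
      show "\<And>x t. (x,t) \<in> Qdom T s1 \<Longrightarrow> Ut2 x t - Ut1 x t = Uxx2 x t - Uxx1 x t"
      proof -
        fix x t assume q: "(x,t) \<in> Qdom T s1"
        then have q2: "(x,t) \<in> Qdom T s2" using subd by blast
        have "Ut1 x t = Uxx1 x t" using he1 q by blast
        moreover have "Ut2 x t = Uxx2 x t" using he2 q2 by blast
        ultimately show "Ut2 x t - Ut1 x t = Uxx2 x t - Uxx1 x t" by simp
      qed
      show "W 0 0 \<ge> 0" using z1 z2 by (simp add: W_def)
      show "\<And>t. t \<in> {0..T} \<Longrightarrow> W (s1 t) t \<ge> 0"
      proof -
        fix t assume t: "t \<in> {0..T}"
        have "s1 t \<ge> 0" using b1 t by (cases "t = 0") (auto simp: less_eq_real_def)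
        then have "(s1 t, t) \<in> Qbar T s2" using t assms(7) by (auto simp: Qbar_def)
        then show "W (s1 t) t \<ge> 0" using U2nn bd1 t by (simp add: W_def)
      qed
      show "\<And>t. 0 < t \<Longrightarrow> t \<le> T \<Longrightarrow> Ux2 0 t - Ux1 0 t \<le> 0"
        using n1 n2 by (metis greaterThanAtMost_iff order_refl diff_le_0_iff_le minus_equation_iff)
    qed
  qed
  show ?thesis
  proof
    fix t assume t: "t \<in> {0..T}"
    have s1t: "0 \<le> s1 t" using b1 t by (cases "t = 0") (auto simp: less_eq_real_def)
    have s12: "s1 t \<le> s2 t" using assms(7) t by auto
    have cc1: "continuous_on {0..s1 t} (\<lambda>x. U s1 x t)" by (rule cont_slice[OF c1 t])
    have cc2: "continuous_on {0..s2 t} (\<lambda>x. U s2 x t)" by (rule cont_slice[OF c2 t])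
    have i2: "(\<lambda>x. U s2 x t) integrable_on {0..s2 t}" by (rule integrable_continuous_real[OF cc2])
    have i21: "(\<lambda>x. U s2 x t) integrable_on {0..s1 t}"
      by (rule integrable_continuous_real[OF continuous_on_subset[OF cc2]]) (use s12 in auto)
    have i22: "(\<lambda>x. U s2 x t) integrable_on {s1 t..s2 t}"
      by (rule integrable_continuous_real[OF continuous_on_subset[OF cc2]]) (use s1t in auto)
    have i1: "(\<lambda>x. U s1 x t) integrable_on {0..s1 t}" by (rule integrable_continuous_real[OF cc1])
    have split: "integral {0..s1 t} (\<lambda>x. U s2 x t) + integral {s1 t..s2 t} (\<lambda>x. U s2 x t) = integral {0..s2 t} (\<lambda>x. U s2 x t)"
      by (rule Henstock_Kurzweil_Integration.integral_combine[OF s1t s12 i2])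
    have le1: "integral {0..s1 t} (\<lambda>x. U s1 x t) \<le> integral {0..s1 t} (\<lambda>x. U s2 x t)"
    proof (rule integral_le[OF i1 i21])
      fix x assume "x \<in> {0..s1 t}"
      then have "(x,t) \<in> Qbar T s1" using t by (auto simp: Qbar_def)
      then show "U s1 x t \<le> U s2 x t" using Wnn[of x t] by (simp add: W_def)
    qed
    have le2: "0 \<le> integral {s1 t..s2 t} (\<lambda>x. U s2 x t)"
    proof (rule integral_nonneg[OF i22])
      fix x assume "x \<in> {s1 t..s2 t}"
      then have "(x,t) \<in> Qbar T s2" using t s1t by (auto simp: Qbar_def)
      then show "0 \<le> U s2 x t" by (rule U2nn)
    qed
    show "Rop h s1 (U s1) t \<ge> Rop h s2 (U s2) t"
      unfolding Rop_def using split le1 le2 by linarith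
  qed
qed

end
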